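(* For any metrized graph $\Gamma$ with $v$ vertices, $$2Kf(\Gamma)= v \cdot y(\Gamma)+\sum_{e_i \in E(\Gamma)} \frac{R_i}{L_i+R_i}\sum_{p \in V(\overline{\Gamma}_i)} r_{\overline{\Gamma}_i}(p,\bar p_i).$$
   Context: A metrized graph $\Gamma$ is a finite connected graph (multiple edges and self-loops allowed) each of whose edges is identified with a closed segment of positive length, with a finite nonempty vertex set $V(\Gamma)$ containing every point of valence $\neq2$; $v=\#V(\Gamma)$, $E(\Gamma)$ its edge set, $L_i$ the length of $e_i$. $r$ (resp. $r_\beta$) denotes effective resistance in $\Gamma$ (resp. in $\beta$), edges being resistors of resistance equal to length. For an edge $e_i$ with end points $p_i,q_i$: if $\Gamma-e_i$ (interior deleted) is connected, $R_i$ is the effective resistance between $p_i,q_i$ in $\Gamma-e_i$, $R_{a_i,p}=\hat j_{p_i}(p,q_i)$, $R_{b_i,p}=\hat j_{q_i}(p,p_i)$, with $\hat j_z(x,y)$ the voltage function of $\Gamma-e_i$ (potential at $x$ when unit current enters at $y$ and exits at $z$, potential $0$ at $z$); if $e_i$ is a bridge, $R_{a_i,p}=0,R_{b_i,p}=R_i$ for $p$ in the component of $\Gamma-e_i$ containing $p_i$, and $R_{a_i,p}=R_i,R_{b_i,p}=0$ otherwise, with every expression in $R_i$ interpreted as its limit as $R_i\to\infty$; for a self-loop $R_i=0$. $Kf(\Gamma)=\frac12\sum_{p,q\in V(\Gamma)}r(p,q)$. $\overline\Gamma_i$ is obtained by contracting $e_i$ to a point, with vertex set the image of $V(\Gamma)$,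 and $\bar p_i$ is the vertex into which $p_i$ (and $q_i$) is contracted. For a fixed vertex $p$ (independent of choice), $y(\Gamma)=\frac14\sum_{e_i}\frac{L_iR_i^2}{(L_i+R_i)^2}+\frac34\sum_{e_i}\frac{L_i(R_{a_i,p}-R_{b_i,p})^2}{(L_i+R_i)^2}$. *)

theory Defs
  imports Complex_Main
begin

text \<open>A metrized graph is modelled as a finite resistive network:
  vertex set V, edge index set E, end points src/tgt, and lengths L.
  Edge interiors consist of points of valence 2, so effective resistances
  between vertices of the metrized graph coincide with those of this network.\<close>

definition graph_adj :: "'e set \<Rightarrow> ('e \<Rightarrow> 'v) \<Rightarrow> ('e \<Rightarrow> 'v) \<Rightarrow> ('v \<times> 'v) set" where
  "graph_adj E src tgt = {(a, b). \<exists>e\<in>E. (src e = a \<and> tgt e = b) \<or> (src e = b \<and> tgt e = a)}"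

definition graph_connected :: "'v set \<Rightarrow> 'e set \<Rightarrow> ('e \<Rightarrow> 'v) \<Rightarrow> ('e \<Rightarrow> 'v) \<Rightarrow> bool" where
  "graph_connected V E src tgt = (\<forall>x\<in>V. \<forall>y\<in>V. (x, y) \<in> (graph_adj E src tgt)\<^sup>*)"

definition metrized_graph ::
  "'v set \<Rightarrow> 'e set \<Rightarrow> ('e \<Rightarrow> 'v) \<Rightarrow> ('e \<Rightarrow> 'v) \<Rightarrow> ('e \<Rightarrow> real) \<Rightarrow> bool" where
  "metrized_graph V E src tgt L =
     (finite V \<and> V \<noteq> {} \<and> finite E \<and>
      (\<forall>e\<in>E. src e \<in> V \<and> tgt e \<in> V \<and> L e > 0) \<and>
      graph_connected V E src tgt)"

definition kirchhoff ::
  "'v set \<Rightarrow> 'e set \<Rightarrow> ('e \<Rightarrow> 'v) \<Rightarrow> ('e \<Rightarrow> 'v) \<Rightarrow> ('e \<Rightarrow> real) \<Rightarrow> 'v \<Rightarrow> 'v \<Rightarrow> ('v \<Rightarrow> real) \<Rightarrow> bool" where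
  "kirchhoff V E src tgt L z y u =
     ((\<forall>x\<in>V. (\<Sum>e\<in>E. (if src e = x then (u x - u (tgt e)) / L e else 0)
                    + (if tgt e = x then (u x - u (src e)) / L e else 0))
             = (if x = y then 1 else 0) - (if x = z then 1 else 0))
      \<and> u z = 0 \<and> (\<forall>x. x \<notin> V \<longrightarrow> u x = 0))"

text \<open>Voltage function j_z(x,y): potential at x when unit current enters at y
  and exits at z, potential 0 at z.\<close>
definition voltage ::
  "'v set \<Rightarrow> 'e set \<Rightarrow> ('e \<Rightarrow> 'v) \<Rightarrow> ('e \<Rightarrow> 'v) \<Rightarrow> ('e \<Rightarrow> real) \<Rightarrow> 'v \<Rightarrow> 'v \<Rightarrow> 'v \<Rightarrow> real" where
  "voltage V E src tgt L z x y = (THE u. kirchhoff V E src tgt L z y u) x"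

definition eff_res ::
  "'v set \<Rightarrow> 'e set \<Rightarrow> ('e \<Rightarrow> 'v) \<Rightarrow> ('e \<Rightarrow> 'v) \<Rightarrow> ('e \<Rightarrow> real) \<Rightarrow> 'v \<Rightarrow> 'v \<Rightarrow> real" where
  "eff_res V E src tgt L p q = voltage V E src tgt L q p p"

definition kirchhoff_index ::
  "'v set \<Rightarrow> 'e set \<Rightarrow> ('e \<Rightarrow> 'v) \<Rightarrow> ('e \<Rightarrow> 'v) \<Rightarrow> ('e \<Rightarrow> real) \<Rightarrow> real" where
  "kirchhoff_index V E src tgt L = (1/2) * (\<Sum>p\<in>V. \<Sum>q\<in>V. eff_res V E src tgt L p q)"

definition is_bridge ::
  "'v set \<Rightarrow> 'e set \<Rightarrow> ('e \<Rightarrow> 'v) \<Rightarrow> ('e \<Rightarrow> 'v) \<Rightarrow> 'e \<Rightarrow> bool" where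
  "is_bridge V E src tgt e = (\<not> graph_connected V (E - {e}) src tgt)"

definition R_edge ::
  "'v set \<Rightarrow> 'e set \<Rightarrow> ('e \<Rightarrow> 'v) \<Rightarrow> ('e \<Rightarrow> 'v) \<Rightarrow> ('e \<Rightarrow> real) \<Rightarrow> 'e \<Rightarrow> real" where
  "R_edge V E src tgt L e = eff_res V (E - {e}) src tgt L (src e) (tgt e)"

definition R_a ::
  "'v set \<Rightarrow> 'e set \<Rightarrow> ('e \<Rightarrow> 'v) \<Rightarrow> ('e \<Rightarrow> 'v) \<Rightarrow> ('e \<Rightarrow> real) \<Rightarrow> 'e \<Rightarrow> 'v \<Rightarrow> real" where
  "R_a V E src tgt L e p = voltage V (E - {e}) src tgt L (src e) p (tgt e)"

definition R_b ::
  "'v set \<Rightarrow> 'e set \<Rightarrow> ('e \<Rightarrow> 'v) \<Rightarrow> ('e \<Rightarrow> 'v) \<Rightarrow> ('e \<Rightarrow> real) \<Rightarrow> 'e \<Rightarrow> 'v \<Rightarrow> real" where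
  "R_b V E src tgt L e p = voltage V (E - {e}) src tgt L (tgt e) p (src e)"

text \<open>Edge terms; for a bridge, the limit as R_i tends to infinity is used
  (for a bridge, one of R_{a_i,p}, R_{b_i,p} is 0 and the other is R_i).\<close>
definition y_term1 ::
  "'v set \<Rightarrow> 'e set \<Rightarrow> ('e \<Rightarrow> 'v) \<Rightarrow> ('e \<Rightarrow> 'v) \<Rightarrow> ('e \<Rightarrow> real) \<Rightarrow> 'e \<Rightarrow> real" where
  "y_term1 V E src tgt L e =
     (if is_bridge V E src tgt e then L e
      else (let R = R_edge V E src tgt L e in L e * R\<^sup>2 / (L e + R)\<^sup>2))"

definition y_term2 ::
  "'v set \<Rightarrow> 'e set \<Rightarrow> ('e \<Rightarrow> 'v) \<Rightarrow> ('e \<Rightarrow> 'v) \<Rightarrow> ('e \<Rightarrow> real) \<Rightarrow> 'e \<Rightarrow> 'v \<Rightarrow> real" where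
  "y_term2 V E src tgt L e p =
     (if is_bridge V E src tgt e then L e
      else (let R = R_edge V E src tgt L e in
            L e * (R_a V E src tgt L e p - R_b V E src tgt L e p)\<^sup>2 / (L e + R)\<^sup>2))"

definition coeff_edge ::
  "'v set \<Rightarrow> 'e set \<Rightarrow> ('e \<Rightarrow> 'v) \<Rightarrow> ('e \<Rightarrow> 'v) \<Rightarrow> ('e \<Rightarrow> real) \<Rightarrow> 'e \<Rightarrow> real" where
  "coeff_edge V E src tgt L e =
     (if is_bridge V E src tgt e then 1
      else (let R = R_edge V E src tgt L e in R / (L e + R)))"

definition y_inv ::
  "'v set \<Rightarrow> 'e set \<Rightarrow> ('e \<Rightarrow> 'v) \<Rightarrow> ('e \<Rightarrow> 'v) \<Rightarrow> ('e \<Rightarrow> real) \<Rightarrow> 'v \<Rightarrow> real" where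
  "y_inv V E src tgt L p =
     (1/4) * (\<Sum>e\<in>E. y_term1 V E src tgt L e) + (3/4) * (\<Sum>e\<in>E. y_term2 V E src tgt L e p)"

text \<open>Contraction of edge e: q_e is identified with p_e (bar p_e = src e).\<close>
definition contr_map :: "('e \<Rightarrow> 'v) \<Rightarrow> ('e \<Rightarrow> 'v) \<Rightarrow> 'e \<Rightarrow> 'v \<Rightarrow> 'v" where
  "contr_map src tgt e x = (if x = tgt e then src e else x)"

definition contr_V :: "'v set \<Rightarrow> ('e \<Rightarrow> 'v) \<Rightarrow> ('e \<Rightarrow> 'v) \<Rightarrow> 'e \<Rightarrow> 'v set" where
  "contr_V V src tgt e = contr_map src tgt e ` V"

definition contr_res ::
  "'v set \<Rightarrow> 'e set \<Rightarrow> ('e \<Rightarrow> 'v) \<Rightarrow> ('e \<Rightarrow> 'v) \<Rightarrow> ('e \<Rightarrow> real) \<Rightarrow> 'e \<Rightarrow> 'v \<Rightarrow> 'v \<Rightarrow> real" where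
  "contr_res V E src tgt L e a b =
     eff_res (contr_V V src tgt e) (E - {e})
       (contr_map src tgt e \<circ> src) (contr_map src tgt e \<circ> tgt) L a b"

end

theory Submission
  imports Defs "Jordan_Normal_Form.Determinant"
begin

definition lap :: "'e set \<Rightarrow> ('e \<Rightarrow> 'v) \<Rightarrow> ('e \<Rightarrow> 'v) \<Rightarrow> ('e \<Rightarrow> real) \<Rightarrow> ('v \<Rightarrow> real) \<Rightarrow> 'v \<Rightarrow> real" where
  "lap E s t L u x = (\<Sum>e\<in>E. (if s e = x then (u x - u (t e)) / L e else 0)
                    + (if t e = x then (u x - u (s e)) / L e else 0))"

lemma kirchhoff_lap: "kirchhoff V E s t L z y u \<longleftrightarrow>
   (\<forall>x\<in>V. lap E s t L u x = (if x = y then 1 else 0) - (if x = z then 1 else 0)) \<and> u z = 0 \<and> (\<forall>x. x\<notin>V \<longrightarrow> u x = 0)"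
  by (simp add: kirchhoff_def lap_def)

lemma lap_lin: "lap E s t L (\<lambda>x. a * u x + b * w x + c) x = a * lap E s t L u x + b * lap E s t L w x"
  unfolding lap_def sum_distrib_left sum.distrib[symmetric]
  by (intro sum.cong) (auto simp: divide_inverse algebra_simps)

lemma lap_const: "lap E s t L (\<lambda>_. c) x = 0" unfolding lap_def by (intro sum.neutral) auto

lemma lap_remove: assumes "e \<in> E" "finite E"
  shows "lap (E - {e}) s t L u x = lap E s t L u x -
     ((if s e = x then (u x - u (t e)) / L e else 0) + (if t e = x then (u x - u (s e)) / L e else 0))"
  unfolding lap_def using assms by (simp add: sum_diff1)

lemma adj_sym: "(x,y) \<in> graph_adj E s t \<Longrightarrow> (y,x) \<in> graph_adj E s t"
  unfolding graph_adj_def by auto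

lemma rtr_sym: "(x,y) \<in> (graph_adj E s t)\<^sup>* \<Longrightarrow> (y,x) \<in> (graph_adj E s t)\<^sup>*"
proof (induction rule: rtrancl_induct)
  case base then show ?case by simp
next
  case (step y z) then show ?case
    by (meson adj_sym converse_rtrancl_into_rtrancl)
qed

lemma const_rtr: assumes "(x,y) \<in> (graph_adj E s t)\<^sup>*" "\<forall>e\<in>E. u (s e) = u (t e)"
  shows "u x = u y"
  using assms(1)
proof (induction rule: rtrancl_induct)
  case base then show ?case by simp
next
  case (step y z) then show ?case using assms(2) unfolding graph_adj_def by auto
qed

locale netw =
  fixes V :: "'v set" and E :: "'e set" and s t :: "'e \<Rightarrow> 'v" and L :: "'e \<Rightarrow> real"
  assumes finV: "finite V" and finE: "finite E"
    and ends: "\<And>e. e \<in> E \<Longrightarrow> s e \<in> V \<and> t e \<in> V"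
    and pos: "\<And>e. e \<in> E \<Longrightarrow> L e > 0"
begin

lemma green: "(\<Sum>x\<in>V. w x * lap E s t L u x) = (\<Sum>e\<in>E. (w (s e) - w (t e)) * (u (s e) - u (t e)) / L e)"
proof -
  have "(\<Sum>x\<in>V. w x * lap E s t L u x) = (\<Sum>e\<in>E. \<Sum>x\<in>V. w x * ((if s e = x then (u x - u (t e)) / L e else 0)
                    + (if t e = x then (u x - u (s e)) / L e else 0)))"
    unfolding lap_def sum_distrib_left by (rule sum.swap)
  also have "\<dots> = (\<Sum>e\<in>E. (w (s e) - w (t e)) * (u (s e) - u (t e)) / L e)"
  proof (intro sum.cong refl)
    fix e assume e: "e \<in> E"
    have "(\<Sum>x\<in>V. w x * ((if s e = x then (u x - u (t e)) / L e else 0)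
                    + (if t e = x then (u x - u (s e)) / L e else 0)))
        = (\<Sum>x\<in>V. (if s e = x then w x * ((u x - u (t e)) / L e) else 0))
          + (\<Sum>x\<in>V. (if t e = x then w x * ((u x - u (s e)) / L e) else 0))"
      unfolding sum.distrib[symmetric] by (intro sum.cong) (auto simp: distrib_left)
    also have "\<dots> = w (s e) * ((u (s e) - u (t e)) / L e) + w (t e) * ((u (t e) - u (s e)) / L e)"
      using ends[OF e] finV by (simp add: sum.delta)
    also have "\<dots> = (w (s e) - w (t e)) * (u (s e) - u (t e)) / L e"
      by (simp add: divide_inverse algebra_simps)
    finally show "(\<Sum>x\<in>V. w x * ((if s e = x then (u x - u (t e)) / L e else 0)
                    + (if t e = x then (u x - u (s e)) / L e else 0))) = (w (s e) - w (t e)) * (u (s e) - u (t e)) / L e" .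
  qed
  finally show ?thesis .
qed

lemma lap_sum0: "(\<Sum>x\<in>V. lap E s t L u x) = 0"
  using green[of "\<lambda>_. 1" u] by simp

lemma energy_zero: assumes "\<forall>x\<in>V. lap E s t L u x = 0" shows "\<forall>e\<in>E. u (s e) = u (t e)"
proof
  fix e assume e: "e \<in> E"
  let ?f = "\<lambda>e. (u (s e) - u (t e)) * (u (s e) - u (t e)) / L e"
  have "sum ?f E = 0"
    using green[of u u] assms by simp
  moreover have "\<forall>e\<in>E. ?f e \<ge> 0"
    using pos by (intro ballI divide_nonneg_pos) auto
  ultimately have "\<forall>e\<in>E. ?f e = 0"
    using sum_nonneg_eq_0_iff[OF finE, of ?f] by simp
  then have "?f e = 0" using e by blast
  then have "(u (s e) - u (t e)) * (u (s e) - u (t e)) = 0" using pos[OF e] by simp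
  then show "u (s e) = u (t e)" by simp
qed

lemma lap_cong: assumes "\<And>w. w \<in> V \<Longrightarrow> u w = u' w" "x \<in> V"
  shows "lap E s t L u x = lap E s t L u' x"
  unfolding lap_def using assms ends by (intro sum.cong) auto

end

locale cnetw = netw +
  assumes conn: "graph_connected V E s t"
begin

lemma harmonic_const: assumes "\<forall>x\<in>V. lap E s t L u x = 0" "x \<in> V" "y \<in> V"
  shows "u x = u y"
  using const_rtr[of x y E s t u] energy_zero[OF assms(1)] conn assms(2,3)
  unfolding graph_connected_def by blast

lemma kir_unique: assumes "z \<in> V" "kirchhoff V E s t L z y u" "kirchhoff V E s t L z y u'"
  shows "u = u'"
proof
  fix x
  let ?d = "\<lambda>x. 1 * u x + (-1) * u' x + 0"
  have "\<forall>x\<in>V. lap E s t L ?d x = 0" using assms(2,3) unfolding kirchhoff_lap lap_lin by simp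
  then have "\<forall>x\<in>V. ?d x = ?d z" using harmonic_const assms(1) by blast
  then show "u x = u' x" using assms unfolding kirchhoff_lap by (cases "x \<in> V") auto
qed

lemma kir_voltage: assumes "z \<in> V" "kirchhoff V E s t L z y u"
  shows "voltage V E s t L z x y = u x"
proof -
  have "(THE u. kirchhoff V E s t L z y u) = u"
    using assms kir_unique by blast
  then show ?thesis unfolding voltage_def by simp
qed

end

context netw begin

definition Mc :: "'v \<Rightarrow> 'v \<Rightarrow> real" where
  "Mc x w = (\<Sum>e\<in>E. (if s e = x then 1 / L e else 0) * ((if w = x then 1 else 0) - (if w = t e then 1 else 0))
             + (if t e = x then 1 / L e else 0) * ((if w = x then 1 else 0) - (if w = s e then 1 else 0)))"

lemma lapM: assumes "x \<in> V" shows "lap E s t L u x = (\<Sum>w\<in>V. Mc x w * u w)"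
proof -
  have "(\<Sum>w\<in>V. Mc x w * u w) = (\<Sum>e\<in>E. \<Sum>w\<in>V. ((if s e = x then 1 / L e else 0) * ((if w = x then 1 else 0) - (if w = t e then 1 else 0))
             + (if t e = x then 1 / L e else 0) * ((if w = x then 1 else 0) - (if w = s e then 1 else 0))) * u w)"
    unfolding Mc_def sum_distrib_right by (rule sum.swap)
  also have "\<dots> = lap E s t L u x"
    unfolding lap_def
  proof (intro sum.cong refl)
    fix e assume e: "e \<in> E"
    define a where "a = (if s e = x then 1 / L e else 0)"
    define b where "b = (if t e = x then 1 / L e else 0)"
    have "(\<Sum>w\<in>V. (a * ((if w = x then 1 else 0) - (if w = t e then 1 else 0))
             + b * ((if w = x then 1 else 0) - (if w = s e then 1 else 0))) * u w)
        = (\<Sum>w\<in>V. (a + b) * (if w = x then u w else 0) - a * (if w = t e then u w else 0) - b * (if w = s e then u w else 0))"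
      by (intro sum.cong refl) (auto simp: algebra_simps)
    also have "\<dots> = (a + b) * u x - a * u (t e) - b * u (s e)"
      using assms ends[OF e] finV
      by (simp add: sum_subtractf sum_distrib_left[symmetric] sum.delta')
    also have "\<dots> = (if s e = x then (u x - u (t e)) / L e else 0) + (if t e = x then (u x - u (s e)) / L e else 0)"
      unfolding a_def b_def by (auto simp: divide_inverse algebra_simps)
    finally show "(\<Sum>w\<in>V. ((if s e = x then 1 / L e else 0) * ((if w = x then 1 else 0) - (if w = t e then 1 else 0))
             + (if t e = x then 1 / L e else 0) * ((if w = x then 1 else 0) - (if w = s e then 1 else 0))) * u w)
       = (if s e = x then (u x - u (t e)) / L e else 0) + (if t e = x then (u x - u (s e)) / L e else 0)"
      unfolding a_def b_def .
  qed
  finally show ?thesis by simp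
qed

end

context cnetw begin

lemma kir_exists: assumes z: "z \<in> V" and y: "y \<in> V"
  shows "\<exists>u. kirchhoff V E s t L z y u"
proof -
  define n where "n = card V"
  obtain h where hb: "bij_betw h {0..<n} V"
    using ex_bij_betw_nat_finite[OF finV] unfolding n_def by blast
  define hi where "hi = inv_into {0..<n} h"
  have hi1: "\<And>i. i < n \<Longrightarrow> hi (h i) = i" using bij_betw_inv_into_left[OF hb] unfolding hi_def by auto
  have hi2: "\<And>w. w \<in> V \<Longrightarrow> h (hi w) = w" using bij_betw_inv_into_right[OF hb] unfolding hi_def by auto
  have hi3: "\<And>w. w \<in> V \<Longrightarrow> hi w < n" using bij_betw_inv_into[OF hb] unfolding hi_def bij_betw_def by auto
  have h3: "\<And>i. i < n \<Longrightarrow> h i \<in> V" using hb unfolding bij_betw_def by auto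
  define uf where "uf v = (\<lambda>w. if w \<in> V then v $ (hi w) else 0)" for v :: "real vec"
  define A where "A = mat n n (\<lambda>(i,j). if h i = z then (if i = j then 1 else 0) else Mc (h i) (h j))"
  have Ac: "A \<in> carrier_mat n n" unfolding A_def by simp
  have Av: "(A *\<^sub>v v) $ i = (if h i = z then v $ i else lap E s t L (uf v) (h i))"
    if v: "v \<in> carrier_vec n" and i: "i < n" for v i
  proof -
    have "(A *\<^sub>v v) $ i = (\<Sum>j\<in>{0..<n}. A $$ (i,j) * v $ j)"
      using v i Ac by (simp add: scalar_prod_def)
    also have "\<dots> = (if h i = z then v $ i else lap E s t L (uf v) (h i))"
    proof (cases "h i = z")
      case True
      then have "(\<Sum>j\<in>{0..<n}. A $$ (i,j) * v $ j) = (\<Sum>j\<in>{0..<n}. if i = j then v $ j else 0)"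
        using i unfolding A_def by (intro sum.cong) auto
      also have "\<dots> = v $ i" using i by (simp add: sum.delta)
      finally show ?thesis using True by simp
    next
      case False
      then have "(\<Sum>j\<in>{0..<n}. A $$ (i,j) * v $ j) = (\<Sum>j\<in>{0..<n}. Mc (h i) (h j) * uf v (h j))"
        using i unfolding A_def uf_def by (intro sum.cong) (auto simp: hi1 h3)
      also have "\<dots> = (\<Sum>w\<in>V. Mc (h i) w * uf v w)"
        using sum.reindex_bij_betw[OF hb, of "\<lambda>w. Mc (h i) w * uf v w"] by simp
      also have "\<dots> = lap E s t L (uf v) (h i)" using lapM[OF h3[OF i]] by simp
      finally show ?thesis using False by simp
    qed
    finally show ?thesis .
  qed
  have lapz: "lap E s t L u z = - (\<Sum>x\<in>V - {z}. lap E s t L u x)" for u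
    using lap_sum0[of u] z finV by (simp add: sum.remove)
  have inj: "v = 0\<^sub>v n" if v: "v \<in> carrier_vec n" and Av0: "A *\<^sub>v v = 0\<^sub>v n" for v
  proof -
    let ?u = "uf v"
    have l1: "lap E s t L ?u x = 0" if "x \<in> V" "x \<noteq> z" for x
      using Av[OF v hi3[OF that(1)]] Av0 hi2[OF that(1)] hi3[OF that(1)] that(2)
      by (metis index_zero_vec(1))
    have "\<forall>x\<in>V. lap E s t L ?u x = 0"
      using l1 lapz[of ?u] by auto
    then have c: "\<forall>x\<in>V. ?u x = ?u z" using harmonic_const z by blast
    have "?u z = 0" using Av[OF v hi3[OF z]] Av0 hi2[OF z] hi3[OF z] unfolding uf_def
      using z by (metis index_zero_vec(1))
    then have "\<And>i. i < n \<Longrightarrow> v $ i = 0" using c h3 hi1 unfolding uf_def by (metis)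
    then show ?thesis using v by (intro eq_vecI) auto
  qed
  have "det A \<noteq> 0"
    using det_0_iff_vec_prod_zero[OF Ac] inj by blast
  from det_non_zero_imp_unit[OF Ac this, of "()"]
  obtain B where B: "B \<in> carrier_mat n n" "A * B = 1\<^sub>m n"
    unfolding Units_def ring_mat_def by auto
  define b where "b = vec n (\<lambda>i. if h i = z then 0 else (if h i = y then 1 else 0) :: real)"
  have bc: "b \<in> carrier_vec n" unfolding b_def by simp
  define xv where "xv = B *\<^sub>v b"
  have xc: "xv \<in> carrier_vec n" unfolding xv_def using B bc by simp
  have Ax: "A *\<^sub>v xv = b" unfolding xv_def using B bc Ac
    by (metis assoc_mult_mat_vec one_mult_mat_vec)
  let ?u = "uf xv"
  have l1: "lap E s t L ?u x = (if x = y then 1 else 0)" if "x \<in> V" "x \<noteq> z" for x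
    using Av[OF xc hi3[OF that(1)]] Ax hi2[OF that(1)] hi3[OF that(1)] that(2)
    unfolding b_def by simp
  have uz: "?u z = 0" using Av[OF xc hi3[OF z]] Ax hi2[OF z] hi3[OF z] z unfolding uf_def b_def
    by simp
  have "lap E s t L ?u z = - (\<Sum>x\<in>V - {z}. if x = y then 1 else 0)"
    using lapz[of ?u] l1 by simp
  also have "\<dots> = (if y = z then 0 else -1)" using finV y by (simp add: sum.delta')
  finally have lz: "lap E s t L ?u z = (if y = z then 0 else -1)" .
  have "kirchhoff V E s t L z y ?u"
    unfolding kirchhoff_lap
  proof (intro conjI ballI allI impI)
    fix x assume "x \<in> V"
    then show "lap E s t L ?u x = (if x = y then 1 else 0) - (if x = z then 1 else 0)"
      using l1 lz by (cases "x = z") auto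
  next
    show "?u z = 0" by (rule uz)
  next
    fix x assume "x \<notin> V" then show "?u x = 0" unfolding uf_def by simp
  qed
  then show ?thesis by blast
qed

end

lemma sum_delta_diff: assumes "finite V" "y \<in> V" "z \<in> V"
  shows "(\<Sum>w\<in>V. f w * ((if w = y then 1 else 0) - (if w = z then 1 else 0))) = f y - (f z :: real)"
proof -
  have "(\<Sum>w\<in>V. f w * ((if w = y then 1 else 0) - (if w = z then 1 else 0)))
      = (\<Sum>w\<in>V. (if w = y then f w else 0) - (if w = z then f w else 0))"
    by (intro sum.cong) auto
  also have "\<dots> = f y - f z" using assms by (simp add: sum_subtractf sum.delta')
  finally show ?thesis .
qed

context cnetw begin

abbreviation "vt \<equiv> voltage V E s t L"
abbreviation "rr \<equiv> eff_res V E s t L"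

lemma kir_vt: assumes "z \<in> V" "y \<in> V" shows "kirchhoff V E s t L z y (\<lambda>x. vt z x y)"
proof -
  obtain u where u: "kirchhoff V E s t L z y u" using kir_exists assms by blast
  have "(\<lambda>x. vt z x y) = u" using kir_voltage[OF assms(1) u] by auto
  then show ?thesis using u by simp
qed

lemma lap_vt: assumes "z \<in> V" "y \<in> V" "x \<in> V"
  shows "lap E s t L (\<lambda>w. vt z w y) x = (if x = y then 1 else 0) - (if x = z then 1 else 0)"
  using kir_vt[OF assms(1,2)] assms(3) unfolding kirchhoff_lap by blast

lemma vt_z: assumes "z \<in> V" "y \<in> V" shows "vt z z y = 0"
  using kir_vt[OF assms] unfolding kirchhoff_lap by blast

lemma vt_off: assumes "z \<in> V" "y \<in> V" "x \<notin> V" shows "vt z x y = 0"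
  using kir_vt[OF assms(1,2)] assms(3) unfolding kirchhoff_lap by blast

lemma vt_same: assumes "z \<in> V" shows "vt z x z = 0"
proof -
  have "kirchhoff V E s t L z z (\<lambda>_. 0)" unfolding kirchhoff_lap lap_const by simp
  from kir_voltage[OF assms this] show ?thesis .
qed

lemma rr_self: "x \<in> V \<Longrightarrow> rr x x = 0"
  unfolding eff_res_def using vt_same by blast

lemma recip: assumes "x \<in> V" "y \<in> V" "z \<in> V" shows "vt z y x = vt z x y"
proof -
  have "(\<Sum>w\<in>V. vt z w x * lap E s t L (\<lambda>w. vt z w y) w) = vt z y x - vt z z x"
    using lap_vt[OF assms(3,2)] assms finV by (simp add: sum_delta_diff)
  moreover have "(\<Sum>w\<in>V. vt z w y * lap E s t L (\<lambda>w. vt z w x) w) = vt z x y - vt z z y"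
    using lap_vt[OF assms(3,1)] assms finV by (simp add: sum_delta_diff)
  moreover have "(\<Sum>w\<in>V. vt z w x * lap E s t L (\<lambda>w. vt z w y) w) = (\<Sum>w\<in>V. vt z w y * lap E s t L (\<lambda>w. vt z w x) w)"
    unfolding green by (intro sum.cong refl) (simp add: algebra_simps)
  ultimately show ?thesis using vt_z assms by simp
qed

lemma jform: assumes "x \<in> V" "y \<in> V" "q \<in> V"
  shows "2 * vt q y x = rr x q + rr y q - rr x y"
proof -
  define c where "c = vt q y x - vt q y y"
  define u where "u w = (if w \<in> V then vt q w x - vt q w y - c else 0)" for w
  have "kirchhoff V E s t L y x u" unfolding kirchhoff_lap
  proof (intro conjI ballI allI impI)
    fix w assume w: "w \<in> V"
    have "lap E s t L u w = lap E s t L (\<lambda>w. 1 * vt q w x + (-1) * vt q w y + (-c)) w"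
      using w by (intro lap_cong) (auto simp: u_def)
    also have "\<dots> = (if w = x then 1 else 0) - (if w = y then 1 else 0)"
      unfolding lap_lin using lap_vt assms w by simp
    finally show "lap E s t L u w = (if w = x then 1 else 0) - (if w = y then 1 else 0)" .
  next
    show "u y = 0" using assms unfolding u_def c_def by simp
  next
    fix w assume "w \<notin> V" then show "u w = 0" unfolding u_def by simp
  qed
  from kir_voltage[OF assms(2) this, of x]
  have "rr x y = vt q x x - vt q x y - c" unfolding eff_res_def u_def using assms by simp
  then show ?thesis unfolding c_def eff_res_def using recip[OF assms(1,2,3)] by simp
qed

lemma rr_sym: assumes "x \<in> V" "y \<in> V" shows "rr x y = rr y x"
proof -
  have "2 * vt x y x = rr x x + rr y x - rr x y" using jform assms by blast
  moreover have "2 * vt x y x = 2 * vt x x y" using recip assms by simp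
  moreover have "vt x x y = 0" using vt_z assms by blast
  ultimately show ?thesis using rr_self assms by simp
qed

lemma sum_vt: assumes "x \<in> V" "y \<in> V" "z \<in> V"
  shows "vt z x y + vt y x z = rr y z"
proof -
  have "2 * vt z x y = rr y z + rr x z - rr y x" using jform assms by blast
  moreover have "2 * vt y x z = rr z y + rr x y - rr z x" using jform assms by blast
  ultimately show ?thesis using rr_sym assms by simp
qed

lemma lap_rr: assumes "x \<in> V" "q \<in> V" "y \<in> V"
  shows "lap E s t L (\<lambda>w. rr w q) y + 2 * (if y = q then 1 else 0) = lap E s t L (\<lambda>w. rr w x) y + 2 * (if y = x then 1 else 0)"
proof -
  have "lap E s t L (\<lambda>w. rr w q) y = lap E s t L (\<lambda>w. 2 * vt q w x + 1 * rr w x + (- rr x q)) y"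
  proof (intro lap_cong assms)
    fix w assume w: "w \<in> V"
    show "rr w q = 2 * vt q w x + 1 * rr w x + - rr x q"
      using jform[OF assms(1) w assms(2)] rr_sym[OF assms(1) w] by simp
  qed
  also have "\<dots> = 2 * ((if y = x then 1 else 0) - (if y = q then 1 else 0)) + lap E s t L (\<lambda>w. rr w x) y"
    unfolding lap_lin using lap_vt assms by simp
  finally show ?thesis by simp
qed

definition H where "H y = lap E s t L (\<lambda>w. eff_res V E s t L w y) y + 2"

lemma lap_rrH: assumes "q \<in> V" "y \<in> V"
  shows "lap E s t L (\<lambda>w. rr w q) y = H y - 2 * (if y = q then 1 else 0)"
  using lap_rr[OF assms(2) assms(1) assms(2)] unfolding H_def by simp

lemma Hval: assumes "y \<in> V"
  shows "2 - H y = (\<Sum>e\<in>E. ((if s e = y then 1 else 0) + (if t e = y then 1 else 0)) * rr (s e) (t e) / L e)"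
proof -
  have "lap E s t L (\<lambda>w. rr w y) y = - (\<Sum>e\<in>E. ((if s e = y then 1 else 0) + (if t e = y then 1 else 0)) * rr (s e) (t e) / L e)"
    unfolding lap_def sum_negf[symmetric]
  proof (intro sum.cong refl)
    fix e assume e: "e \<in> E"
    show "(if s e = y then (rr y y - rr (t e) y) / L e else 0) + (if t e = y then (rr y y - rr (s e) y) / L e else 0) =
         - (((if s e = y then 1 else 0) + (if t e = y then 1 else 0)) * rr (s e) (t e) / L e)"
      using rr_self[OF assms] rr_sym[of "s e" "t e"] ends[OF e] by (auto simp: divide_inverse algebra_simps)
  qed
  then show ?thesis unfolding H_def by simp
qed

definition K where "K p = (\<Sum>x\<in>V. eff_res V E s t L x p * H x)"

lemma T_K: assumes "p \<in> V"
  shows "(\<Sum>e\<in>E. (rr p (s e) - rr p (t e))^2 / L e) = K p"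
proof -
  have "(\<Sum>x\<in>V. rr x p * lap E s t L (\<lambda>w. rr w p) x) = (\<Sum>e\<in>E. (rr (s e) p - rr (t e) p) * (rr (s e) p - rr (t e) p) / L e)"
    by (rule green)
  also have "\<dots> = (\<Sum>e\<in>E. (rr p (s e) - rr p (t e))^2 / L e)"
    using ends assms by (intro sum.cong refl) (simp add: rr_sym power2_eq_square)
  finally have 1: "(\<Sum>x\<in>V. rr x p * lap E s t L (\<lambda>w. rr w p) x) = (\<Sum>e\<in>E. (rr p (s e) - rr p (t e))^2 / L e)" .
  have "(\<Sum>x\<in>V. rr x p * lap E s t L (\<lambda>w. rr w p) x) = (\<Sum>x\<in>V. rr x p * H x - 2 * (if x = p then rr x p else 0))"
  proof (intro sum.cong refl)
    fix x assume x: "x \<in> V"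
    show "rr x p * lap E s t L (\<lambda>w. rr w p) x = rr x p * H x - 2 * (if x = p then rr x p else 0)"
    proof -
      have e: "lap E s t L (\<lambda>w. rr w p) x = H x - 2 * (if x = p then 1 else 0)"
        using lap_rrH assms x by blast
      show ?thesis unfolding e by (simp add: algebra_simps)
    qed
  qed
  also have "\<dots> = K p" unfolding K_def using assms finV rr_self[OF assms] by (simp add: sum_subtractf sum.delta' sum_distrib_left[symmetric])
  finally show ?thesis using 1 by simp
qed

lemma K_const: assumes "p \<in> V" "q \<in> V" shows "K p = K q"
proof -
  have a: "(\<Sum>x\<in>V. rr x p * lap E s t L (\<lambda>w. rr w q) x) = K p - 2 * rr q p"
  proof -
    have "(\<Sum>x\<in>V. rr x p * lap E s t L (\<lambda>w. rr w q) x) = (\<Sum>x\<in>V. rr x p * H x - 2 * (if x = q then rr x p else 0))"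
    proof (intro sum.cong refl)
    fix x assume x: "x \<in> V"
    show "rr x p * lap E s t L (\<lambda>w. rr w q) x = rr x p * H x - 2 * (if x = q then rr x p else 0)"
    proof -
      have e: "lap E s t L (\<lambda>w. rr w q) x = H x - 2 * (if x = q then 1 else 0)"
        using lap_rrH assms x by blast
      show ?thesis unfolding e by (simp add: algebra_simps)
    qed
  qed
    also have "\<dots> = K p - 2 * rr q p" unfolding K_def using assms finV by (simp add: sum_subtractf sum.delta' sum_distrib_left[symmetric])
    finally show ?thesis .
  qed
  have b: "(\<Sum>x\<in>V. rr x q * lap E s t L (\<lambda>w. rr w p) x) = K q - 2 * rr p q"
  proof -
    have "(\<Sum>x\<in>V. rr x q * lap E s t L (\<lambda>w. rr w p) x) = (\<Sum>x\<in>V. rr x q * H x - 2 * (if x = p then rr x q else 0))"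
    proof (intro sum.cong refl)
    fix x assume x: "x \<in> V"
    show "rr x q * lap E s t L (\<lambda>w. rr w p) x = rr x q * H x - 2 * (if x = p then rr x q else 0)"
    proof -
      have e: "lap E s t L (\<lambda>w. rr w p) x = H x - 2 * (if x = p then 1 else 0)"
        using lap_rrH assms x by blast
      show ?thesis unfolding e by (simp add: algebra_simps)
    qed
  qed
    also have "\<dots> = K q - 2 * rr p q" unfolding K_def using assms finV by (simp add: sum_subtractf sum.delta' sum_distrib_left[symmetric])
    finally show ?thesis .
  qed
  have "(\<Sum>x\<in>V. rr x p * lap E s t L (\<lambda>w. rr w q) x) = (\<Sum>x\<in>V. rr x q * lap E s t L (\<lambda>w. rr w p) x)"
    unfolding green by (intro sum.cong refl) (simp add: algebra_simps)
  then show ?thesis using a b rr_sym assms by simp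
qed

end

context cnetw begin

lemma sumK: assumes "p \<in> V" shows "(\<Sum>x\<in>V. K x) = real (card V) * K p"
proof -
  have "(\<Sum>x\<in>V. K x) = (\<Sum>x\<in>V. K p)"
  proof (intro sum.cong refl)
    fix x assume "x \<in> V" then show "K x = K p" using K_const assms by blast
  qed
  then show ?thesis by simp
qed

lemma foster_x: assumes x: "x \<in> V"
  shows "(\<Sum>e\<in>E. rr (s e) (t e) / L e * (rr x (s e) + rr x (t e))) = (\<Sum>y\<in>V. (2 - H y) * rr x y)"
proof -
  have "(\<Sum>y\<in>V. (2 - H y) * rr x y) = (\<Sum>y\<in>V. \<Sum>e\<in>E. ((if s e = y then 1 else 0) + (if t e = y then 1 else 0)) * rr (s e) (t e) / L e * rr x y)"
  proof (intro sum.cong refl)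
    fix y assume y: "y \<in> V"
    show "(2 - H y) * rr x y = (\<Sum>e\<in>E. ((if s e = y then 1 else 0) + (if t e = y then 1 else 0)) * rr (s e) (t e) / L e * rr x y)"
      unfolding Hval[OF y] by (simp add: sum_distrib_right)
  qed
  also have "\<dots> = (\<Sum>e\<in>E. \<Sum>y\<in>V. ((if s e = y then 1 else 0) + (if t e = y then 1 else 0)) * rr (s e) (t e) / L e * rr x y)"
    by (rule sum.swap)
  also have "\<dots> = (\<Sum>e\<in>E. rr (s e) (t e) / L e * (rr x (s e) + rr x (t e)))"
  proof (intro sum.cong refl)
    fix e assume e: "e \<in> E"
    have "(\<Sum>y\<in>V. ((if s e = y then 1 else 0) + (if t e = y then 1 else 0)) * rr (s e) (t e) / L e * rr x y)
       = (\<Sum>y\<in>V. (if s e = y then rr (s e) (t e) / L e * rr x y else 0) + (if t e = y then rr (s e) (t e) / L e * rr x y else 0))"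
      by (intro sum.cong refl) auto
    also have "\<dots> = rr (s e) (t e) / L e * (rr x (s e) + rr x (t e))"
      using ends[OF e] finV by (simp add: sum.distrib sum.delta distrib_left)
    finally show "(\<Sum>y\<in>V. ((if s e = y then 1 else 0) + (if t e = y then 1 else 0)) * rr (s e) (t e) / L e * rr x y)
       = rr (s e) (t e) / L e * (rr x (s e) + rr x (t e))" .
  qed
  finally show ?thesis by simp
qed

lemma main_id: assumes p: "p \<in> V"
  shows "(\<Sum>x\<in>V. \<Sum>y\<in>V. rr x y) =
     real (card V) * ((1/4) * (\<Sum>e\<in>E. (rr (s e) (t e))^2 / L e)
                    + (3/4) * (\<Sum>e\<in>E. (rr p (s e) - rr p (t e))^2 / L e))
   + (\<Sum>e\<in>E. (1 / L e) * (\<Sum>x\<in>V. rr (s e) (t e) * rr x (s e) - ((rr x (s e) + rr (s e) (t e) - rr x (t e)) / 2)^2))"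
proof -
  define n where "n = real (card V)"
  define S where "S = (\<Sum>x\<in>V. \<Sum>y\<in>V. rr x y)"
  define Q where "Q = (\<Sum>e\<in>E. (rr (s e) (t e))^2 / L e)"
  define A where "A e x = rr (s e) (t e) / L e * (rr x (s e) + rr x (t e))" for e x
  define B where "B e x = (rr x (s e) - rr x (t e))^2 / L e" for e x
  define C where "C e = (rr (s e) (t e))^2 / L e" for e
  have a: "(\<Sum>e\<in>E. (rr p (s e) - rr p (t e))^2 / L e) = K p" using T_K p by blast
  have b: "(\<Sum>e\<in>E. (1 / L e) * (\<Sum>x\<in>V. rr (s e) (t e) * rr x (s e) - ((rr x (s e) + rr (s e) (t e) - rr x (t e)) / 2)^2))
       = (\<Sum>e\<in>E. \<Sum>x\<in>V. (1/2) * A e x - (1/4) * B e x - (1/4) * C e)"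
    unfolding sum_distrib_left
  proof (intro sum.cong refl)
    fix e x assume e: "e \<in> E"
    show "1 / L e * (rr (s e) (t e) * rr x (s e) - ((rr x (s e) + rr (s e) (t e) - rr x (t e)) / 2)\<^sup>2) =
         1 / 2 * A e x - 1 / 4 * B e x - 1 / 4 * C e"
      unfolding A_def B_def C_def using pos[OF e]
      by (simp add: field_simps power2_eq_square)
  qed
  have b2: "(\<Sum>e\<in>E. \<Sum>x\<in>V. (1/2) * A e x - (1/4) * B e x - (1/4) * C e)
     = (1/2) * (\<Sum>e\<in>E. \<Sum>x\<in>V. A e x) - (1/4) * (\<Sum>e\<in>E. \<Sum>x\<in>V. B e x) - (1/4) * n * Q"
  proof -
    have "(\<Sum>e\<in>E. \<Sum>x\<in>V. (1/2) * A e x - (1/4) * B e x - (1/4) * C e)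
       = (\<Sum>e\<in>E. (1/2) * (\<Sum>x\<in>V. A e x) - (1/4) * (\<Sum>x\<in>V. B e x) - ((1/4) * n) * C e)"
      by (intro sum.cong refl) (simp add: sum_subtractf sum_distrib_left[symmetric] n_def sum_divide_distrib[symmetric])
    also have "\<dots> = (1/2) * (\<Sum>e\<in>E. \<Sum>x\<in>V. A e x) - (1/4) * (\<Sum>e\<in>E. \<Sum>x\<in>V. B e x) - ((1/4) * n) * (\<Sum>e\<in>E. C e)"
      by (simp only: sum_subtractf sum_distrib_left)
    finally show ?thesis unfolding Q_def C_def by simp
  qed
  have c: "(\<Sum>e\<in>E. \<Sum>x\<in>V. B e x) = n * K p"
  proof -
    have "(\<Sum>e\<in>E. \<Sum>x\<in>V. B e x) = (\<Sum>x\<in>V. \<Sum>e\<in>E. B e x)" by (rule sum.swap)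
    also have "\<dots> = (\<Sum>x\<in>V. K x)" unfolding B_def using T_K by (intro sum.cong) auto
    also have "\<dots> = n * K p" using sumK p unfolding n_def by blast
    finally show ?thesis .
  qed
  have d: "(\<Sum>e\<in>E. \<Sum>x\<in>V. A e x) = 2 * S - n * K p"
  proof -
    have "(\<Sum>e\<in>E. \<Sum>x\<in>V. A e x) = (\<Sum>x\<in>V. \<Sum>e\<in>E. A e x)" by (rule sum.swap)
    also have "\<dots> = (\<Sum>x\<in>V. \<Sum>y\<in>V. (2 - H y) * rr x y)" unfolding A_def using foster_x by (intro sum.cong) auto
    also have "\<dots> = (\<Sum>x\<in>V. \<Sum>y\<in>V. 2 * rr x y - rr y x * H y)"
    proof (intro sum.cong refl)
      fix x y assume "x \<in> V" "y \<in> V"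
      then show "(2 - H y) * rr x y = 2 * rr x y - rr y x * H y" using rr_sym[of x y] by (simp add: algebra_simps)
    qed
    also have "\<dots> = (\<Sum>x\<in>V. \<Sum>y\<in>V. 2 * rr x y) - (\<Sum>x\<in>V. \<Sum>y\<in>V. rr y x * H y)"
      by (simp only: sum_subtractf)
    also have "(\<Sum>x\<in>V. \<Sum>y\<in>V. rr y x * H y) = (\<Sum>x\<in>V. K x)" unfolding K_def by simp
    also have "\<dots> = n * K p" using sumK p unfolding n_def by blast
    also have "(\<Sum>x\<in>V. \<Sum>y\<in>V. 2 * rr x y) = 2 * S" unfolding S_def by (simp add: sum_distrib_left)
    finally show ?thesis .
  qed
  show ?thesis
    unfolding S_def[symmetric] n_def[symmetric] Q_def[symmetric] a b b2 c d by (simp add: algebra_simps)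
qed

end

lemma lap_scale: "lap E s t L (\<lambda>x. c * u x) x = c * lap E s t L u x"
  using lap_lin[of E s t L c u 0 u 0 x] by simp

lemma lap_edges_const: assumes "\<forall>e\<in>E. u (s e) = u (t e)" shows "lap E s t L u x = 0"
  unfolding lap_def using assms by (intro sum.neutral) auto

context netw begin

lemma energy_zero2: assumes "(\<Sum>x\<in>V. u x * lap E s t L u x) = 0" shows "\<forall>e\<in>E. u (s e) = u (t e)"
proof
  fix e assume e: "e \<in> E"
  let ?f = "\<lambda>e. (u (s e) - u (t e)) * (u (s e) - u (t e)) / L e"
  have "sum ?f E = 0"
    using green[of u u] assms by simp
  moreover have "\<forall>e\<in>E. ?f e \<ge> 0"
    using pos by (intro ballI divide_nonneg_pos) auto
  ultimately have "\<forall>e\<in>E. ?f e = 0"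
    using sum_nonneg_eq_0_iff[OF finE, of ?f] by simp
  then have "?f e = 0" using e by blast
  then have "(u (s e) - u (t e)) * (u (s e) - u (t e)) = 0" using pos[OF e] by simp
  then show "u (s e) = u (t e)" by simp
qed

lemma cut_sum: assumes "S \<subseteq> V"
  shows "(\<Sum>x\<in>S. lap E s t L u x) = (\<Sum>e\<in>E. (if s e \<in> S then (u (s e) - u (t e)) / L e else 0)
                                       + (if t e \<in> S then (u (t e) - u (s e)) / L e else 0))"
proof -
  have fS: "finite S" using assms finV finite_subset by blast
  have "(\<Sum>x\<in>S. lap E s t L u x) = (\<Sum>e\<in>E. \<Sum>x\<in>S. (if s e = x then (u x - u (t e)) / L e else 0)
                    + (if t e = x then (u x - u (s e)) / L e else 0))"
    unfolding lap_def by (rule sum.swap)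
  also have "\<dots> = (\<Sum>e\<in>E. (if s e \<in> S then (u (s e) - u (t e)) / L e else 0)
                                       + (if t e \<in> S then (u (t e) - u (s e)) / L e else 0))"
    using fS by (intro sum.cong refl) (simp add: sum.distrib sum.delta)
  finally show ?thesis .
qed

end

context cnetw begin

lemma rho_eq: assumes "e \<in> E" shows "vt (s e) (t e) (t e) = rr (s e) (t e)"
  using rr_sym ends[OF assms] unfolding eff_res_def by metis

lemma Phi_a: assumes "e \<in> E" shows "vt (s e) (s e) (t e) = 0"
  using vt_z ends[OF assms] by blast

lemma Phi_form: assumes "e \<in> E" "x \<in> V"
  shows "2 * vt (s e) x (t e) = rr x (s e) + rr (s e) (t e) - rr x (t e)"
proof -
  have V: "s e \<in> V" "t e \<in> V" using ends[OF assms(1)] by auto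
  have 1: "2 * vt (s e) x (t e) = rr (t e) (s e) + rr x (s e) - rr (t e) x"
    using jform[of "t e" x "s e"] V assms(2) by blast
  have "rr (t e) (s e) = rr (s e) (t e)" "rr (t e) x = rr x (t e)" using rr_sym V assms(2) by auto
  then show ?thesis using 1 by simp
qed

lemma Phi_lap_del: assumes e: "e \<in> E" and x: "x \<in> V"
  shows "lap (E - {e}) s t L (\<lambda>w. vt (s e) w (t e)) x
     = (1 - rr (s e) (t e) / L e) * ((if x = t e then 1 else 0) - (if x = s e then 1 else 0))"
proof -
  have l: "lap E s t L (\<lambda>w. vt (s e) w (t e)) x = (if x = t e then 1 else 0) - (if x = s e then 1 else 0)"
    using lap_vt ends[OF e] x by blast
  have L0: "L e \<noteq> 0" using pos[OF e] by simp
  show ?thesis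
    unfolding lap_remove[OF e finE] l using rho_eq[OF e] Phi_a[OF e] L0
    by (cases "x = t e"; cases "x = s e") (auto simp: field_simps)
qed

lemma self_loop_not_bridge: assumes "e \<in> E" "s e = t e" shows "\<not> is_bridge V E s t e"
proof -
  have "(x, y) \<in> (graph_adj (E - {e}) s t)\<^sup>*" if "(x, y) \<in> (graph_adj E s t)\<^sup>*" for x y
    using that
  proof (induction rule: rtrancl_induct)
    case base then show ?case by simp
  next
    case (step y z)
    then obtain e' where e': "e' \<in> E" "(s e' = y \<and> t e' = z) \<or> (s e' = z \<and> t e' = y)"
      unfolding graph_adj_def by auto
    show ?case
    proof (cases "e' = e")
      case True then have "y = z" using e' assms by auto
      then show ?thesis using step by simp
    next
      case False then have "(y, z) \<in> graph_adj (E - {e}) s t" using e' unfolding graph_adj_def by auto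
      then show ?thesis using step by (meson rtrancl.rtrancl_into_rtrancl)
    qed
  qed
  then show ?thesis using conn unfolding is_bridge_def graph_connected_def by blast
qed

end

context cnetw begin

lemma nonbridge_terms: assumes e: "e \<in> E" and nb: "\<not> is_bridge V E s t e"
  shows "y_term1 V E s t L e = (rr (s e) (t e))^2 / L e \<and>
         (\<forall>p\<in>V. y_term2 V E s t L e p = (rr p (s e) - rr p (t e))^2 / L e) \<and>
         coeff_edge V E s t L e = rr (s e) (t e) / L e"
proof -
  interpret D: cnetw V "E - {e}" s t L
    using finV finE ends pos nb unfolding is_bridge_def by unfold_locales auto
  have V: "s e \<in> V" "t e \<in> V" using ends[OF e] by auto
  have Lp: "L e > 0" using pos[OF e] .
  define \<rho> where "\<rho> = rr (s e) (t e)"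
  define \<Phi> where "\<Phi> w = vt (s e) w (t e)" for w
  have \<Phi>b: "\<Phi> (t e) = \<rho>" unfolding \<Phi>_def \<rho>_def using rho_eq[OF e] .
  have \<Phi>a: "\<Phi> (s e) = 0" unfolding \<Phi>_def using Phi_a[OF e] .
  have lapD: "lap (E - {e}) s t L \<Phi> x = (1 - \<rho> / L e) * ((if x = t e then 1 else 0) - (if x = s e then 1 else 0))"
    if "x \<in> V" for x
    unfolding \<Phi>_def \<rho>_def using Phi_lap_del[OF e that] .
  have \<rho>L: "\<rho> \<noteq> L e"
  proof
    assume h: "\<rho> = L e"
    then have "\<forall>x\<in>V. lap (E - {e}) s t L \<Phi> x = 0" using lapD Lp by simp
    then have "\<Phi> (t e) = \<Phi> (s e)" using D.harmonic_const V by blast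
    then show False using \<Phi>a \<Phi>b h Lp by simp
  qed
  define c where "c = L e / (L e - \<rho>)"
  have c1: "c * (1 - \<rho> / L e) = 1" unfolding c_def using \<rho>L Lp by (simp add: field_simps)
  have c0: "c \<noteq> 0" unfolding c_def using \<rho>L Lp by simp
  have LR: "L e + c * \<rho> = c * L e" unfolding c_def using \<rho>L Lp by (simp add: field_simps)
  have kir: "kirchhoff V (E - {e}) s t L (s e) (t e) (\<lambda>w. c * \<Phi> w)"
    unfolding kirchhoff_lap
  proof (intro conjI ballI allI impI)
    fix x assume x: "x \<in> V"
    show "lap (E - {e}) s t L (\<lambda>w. c * \<Phi> w) x = (if x = t e then 1 else 0) - (if x = s e then 1 else 0)"
      unfolding lap_scale lapD[OF x] mult.assoc[symmetric] c1 by simp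
  next
    show "c * \<Phi> (s e) = 0" using \<Phi>a by simp
  next
    fix x assume "x \<notin> V" then show "c * \<Phi> x = 0" unfolding \<Phi>_def using vt_off V by simp
  qed
  have vD: "voltage V (E - {e}) s t L (s e) x (t e) = c * \<Phi> x" for x
    using D.kir_voltage[OF V(1) kir] .
  have RE: "R_edge V E s t L e = c * \<rho>"
  proof -
    have "R_edge V E s t L e = eff_res V (E - {e}) s t L (t e) (s e)"
      unfolding R_edge_def using D.rr_sym V by blast
    also have "\<dots> = c * \<rho>" unfolding eff_res_def vD \<Phi>b ..
    finally show ?thesis .
  qed
  have Ra: "R_a V E s t L e p = c * \<Phi> p" for p unfolding R_a_def vD ..
  have Rb: "R_b V E s t L e p = c * \<rho> - c * \<Phi> p" if p: "p \<in> V" for p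
  proof -
    have "voltage V (E - {e}) s t L (s e) p (t e) + voltage V (E - {e}) s t L (t e) p (s e)
          = eff_res V (E - {e}) s t L (t e) (s e)"
      using D.sum_vt[of p "t e" "s e"] V p by blast
    also have "\<dots> = c * \<rho>" unfolding eff_res_def vD \<Phi>b ..
    finally show ?thesis unfolding R_b_def vD by simp
  qed
  have t1: "y_term1 V E s t L e = \<rho>^2 / L e"
    unfolding y_term1_def Let_def RE LR using nb c0 Lp
    by (simp add: power_mult_distrib field_simps power2_eq_square)
  have t2: "y_term2 V E s t L e p = (rr p (s e) - rr p (t e))^2 / L e" if p: "p \<in> V" for p
  proof -
    have "2 * \<Phi> p - \<rho> = rr p (s e) - rr p (t e)"
      unfolding \<Phi>_def \<rho>_def using Phi_form[OF e p] by simp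
    moreover have "y_term2 V E s t L e p = (2 * \<Phi> p - \<rho>)^2 / L e"
      unfolding y_term2_def Let_def RE LR Ra Rb[OF p] using nb c0 Lp
      by (simp add: power_mult_distrib field_simps power2_eq_square)
    ultimately show ?thesis by simp
  qed
  have t3: "coeff_edge V E s t L e = \<rho> / L e"
    unfolding coeff_edge_def Let_def RE LR using nb c0 Lp by simp
  show ?thesis using t1 t2 t3 unfolding \<rho>_def by blast
qed

end

context cnetw begin

lemma bridge_terms: assumes e: "e \<in> E" and br: "is_bridge V E s t e"
  shows "y_term1 V E s t L e = (rr (s e) (t e))^2 / L e \<and>
         (\<forall>p\<in>V. y_term2 V E s t L e p = (rr p (s e) - rr p (t e))^2 / L e) \<and>
         coeff_edge V E s t L e = rr (s e) (t e) / L e"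
proof -
  interpret N: netw V "E - {e}" s t L
    using finV finE ends pos by unfold_locales auto
  have V: "s e \<in> V" "t e \<in> V" using ends[OF e] by auto
  have Lp: "L e > 0" using pos[OF e] .
  have ab: "s e \<noteq> t e" using self_loop_not_bridge[OF e] br by blast
  define Rb where "Rb = (graph_adj (E - {e}) s t)\<^sup>*"
  have step: "(s e, z) \<in> Rb \<or> (t e, z) \<in> Rb"
    if "(x, z) \<in> (graph_adj E s t)\<^sup>*" "(s e, x) \<in> Rb \<or> (t e, x) \<in> Rb" for x z
    using that
  proof (induction rule: rtrancl_induct)
    case base then show ?case by simp
  next
    case (step y z)
    then obtain e' where e': "e' \<in> E" "(s e' = y \<and> t e' = z) \<or> (s e' = z \<and> t e' = y)"
      unfolding graph_adj_def by auto
    show ?case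
    proof (cases "e' = e")
      case True then have "z = s e \<or> z = t e" using e' by auto
      then show ?thesis unfolding Rb_def by auto
    next
      case False then have "(y, z) \<in> graph_adj (E - {e}) s t" using e' unfolding graph_adj_def by auto
      then show ?thesis using step unfolding Rb_def by (meson rtrancl.rtrancl_into_rtrancl)
    qed
  qed
  have reach: "(s e, w) \<in> Rb \<or> (t e, w) \<in> Rb" if "w \<in> V" for w
    using step[of "s e" w] conn V that unfolding graph_connected_def Rb_def by blast
  have aC: "(t e, s e) \<notin> Rb"
  proof
    assume h: "(t e, s e) \<in> Rb"
    have "(t e, w) \<in> Rb" if "w \<in> V" for w
      using reach[OF that] h unfolding Rb_def by (meson rtrancl_trans)
    then have "graph_connected V (E - {e}) s t"
      unfolding graph_connected_def
    proof (intro ballI)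
      fix x y assume x: "x \<in> V" and y: "y \<in> V"
      assume all: "\<And>w. w \<in> V \<Longrightarrow> (t e, w) \<in> Rb"
      have "(x, t e) \<in> Rb" using all[OF x] unfolding Rb_def by (rule rtr_sym)
      moreover have "(t e, y) \<in> Rb" using all[OF y] .
      ultimately show "(x, y) \<in> (graph_adj (E - {e}) s t)\<^sup>*" unfolding Rb_def by (rule rtrancl_trans)
    qed
    then show False using br unfolding is_bridge_def by blast
  qed
  define C where "C = {w \<in> V. (t e, w) \<in> Rb}"
  have bC: "t e \<in> C" unfolding C_def Rb_def using V by simp
  have aC': "s e \<notin> C" unfolding C_def using aC by simp
  have clos: "s e' \<in> C \<longleftrightarrow> t e' \<in> C" if "e' \<in> E - {e}" for e'
  proof -
    have "(s e', t e') \<in> graph_adj (E - {e}) s t" "(t e', s e') \<in> graph_adj (E - {e}) s t"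
      using that unfolding graph_adj_def by auto
    moreover have "s e' \<in> V" "t e' \<in> V" using ends that by auto
    ultimately show ?thesis unfolding C_def Rb_def
      using rtrancl.rtrancl_into_rtrancl[of "t e" "s e'" "graph_adj (E - {e}) s t" "t e'"]
            rtrancl.rtrancl_into_rtrancl[of "t e" "t e'" "graph_adj (E - {e}) s t" "s e'"]
      by blast
  qed
  define \<rho> where "\<rho> = rr (s e) (t e)"
  define \<Phi> where "\<Phi> w = vt (s e) w (t e)" for w
  have \<Phi>b: "\<Phi> (t e) = \<rho>" unfolding \<Phi>_def \<rho>_def using rho_eq[OF e] .
  have \<Phi>a: "\<Phi> (s e) = 0" unfolding \<Phi>_def using Phi_a[OF e] .
  define trm where "trm e' = (if s e' \<in> C then (\<Phi> (s e') - \<Phi> (t e')) / L e' else 0)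
                                       + (if t e' \<in> C then (\<Phi> (t e') - \<Phi> (s e')) / L e' else 0)" for e'
  have CV: "C \<subseteq> V" unfolding C_def by auto
  have "(\<Sum>x\<in>C. lap E s t L \<Phi> x) = (\<Sum>e'\<in>E. trm e')"
    by (simp add: cut_sum[OF CV] trm_def)
  also have "\<dots> = trm e + (\<Sum>e'\<in>E - {e}. trm e')" using e finE by (simp add: sum.remove)
  also have "(\<Sum>e'\<in>E - {e}. trm e') = 0"
  proof (intro sum.neutral ballI)
    fix e' assume e': "e' \<in> E - {e}"
    show "trm e' = 0" using clos[OF e'] by (auto simp: trm_def add_divide_distrib[symmetric])
  qed
  also have "trm e = \<rho> / L e" unfolding trm_def using bC aC' \<Phi>a \<Phi>b by simp
  finally have cs1: "(\<Sum>x\<in>C. lap E s t L \<Phi> x) = \<rho> / L e" by simp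
  have "(\<Sum>x\<in>C. lap E s t L \<Phi> x) = (\<Sum>x\<in>C. (if x = t e then 1 else 0) - (if x = s e then 1 else 0))"
    using CV lap_vt V unfolding \<Phi>_def by (intro sum.cong refl) auto
  also have "\<dots> = 1" using bC aC' finite_subset[OF CV finV] by (simp add: sum_subtractf sum.delta sum.delta')
  finally have "\<rho> / L e = 1" using cs1 by simp
  then have \<rho>L: "\<rho> = L e" using Lp by (simp add: field_simps)
  have "\<forall>x\<in>V. lap (E - {e}) s t L \<Phi> x = 0"
    using Phi_lap_del[OF e] \<rho>L Lp unfolding \<Phi>_def \<rho>_def by simp
  then have eq: "\<forall>e'\<in>E - {e}. \<Phi> (s e') = \<Phi> (t e')" using N.energy_zero by blast
  have \<Phi>v: "\<Phi> w = 0 \<or> \<Phi> w = L e" if "w \<in> V" for w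
  proof (cases "(s e, w) \<in> Rb")
    case True then have "\<Phi> (s e) = \<Phi> w" using const_rtr[of "s e" w "E - {e}" s t \<Phi>] eq unfolding Rb_def by blast
    then show ?thesis using \<Phi>a by simp
  next
    case False then have "(t e, w) \<in> Rb" using reach[OF that] by blast
    then have "\<Phi> (t e) = \<Phi> w" using const_rtr[of "t e" w "E - {e}" s t \<Phi>] eq unfolding Rb_def by blast
    then show ?thesis using \<Phi>b \<rho>L by simp
  qed
  have t2: "y_term2 V E s t L e p = (rr p (s e) - rr p (t e))^2 / L e" if p: "p \<in> V" for p
  proof -
    have "2 * \<Phi> p - \<rho> = rr p (s e) - rr p (t e)"
      unfolding \<Phi>_def \<rho>_def using Phi_form[OF e p] by simp
    moreover have "(2 * \<Phi> p - \<rho>)^2 = (L e)^2" using \<Phi>v[OF p] \<rho>L by (auto simp: power2_eq_square)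
    ultimately show ?thesis unfolding y_term2_def using br Lp by (simp add: power2_eq_square)
  qed
  show ?thesis using t2 br Lp \<rho>L unfolding y_term1_def coeff_edge_def \<rho>_def[symmetric]
    by (simp add: power2_eq_square)
qed

end

context cnetw begin

lemma contr_conn: assumes "(x, y) \<in> (graph_adj E s t)\<^sup>*"
  shows "(contr_map s t e x, contr_map s t e y) \<in> (graph_adj (E - {e}) (contr_map s t e \<circ> s) (contr_map s t e \<circ> t))\<^sup>*"
  using assms
proof (induction rule: rtrancl_induct)
  case base then show ?case by simp
next
  case (step y z)
  then obtain e' where e': "e' \<in> E" "(s e' = y \<and> t e' = z) \<or> (s e' = z \<and> t e' = y)"
    unfolding graph_adj_def by auto
  show ?case
  proof (cases "e' = e")
    case True then have "contr_map s t e y = contr_map s t e z" using e' unfolding contr_map_def by auto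
    then show ?thesis using step by simp
  next
    case False then have "(contr_map s t e y, contr_map s t e z) \<in> graph_adj (E - {e}) (contr_map s t e \<circ> s) (contr_map s t e \<circ> t)"
      using e' unfolding graph_adj_def by auto
    then show ?thesis using step by (meson rtrancl.rtrancl_into_rtrancl)
  qed
qed

lemma rho_pos: assumes e: "e \<in> E" and ab: "s e \<noteq> t e" shows "rr (s e) (t e) \<noteq> 0"
proof
  assume h: "rr (s e) (t e) = 0"
  define \<Phi> where "\<Phi> w = vt (s e) w (t e)" for w
  have V: "s e \<in> V" "t e \<in> V" using ends[OF e] by auto
  have lp: "lap E s t L \<Phi> x = (if x = t e then 1 else 0) - (if x = s e then 1 else 0)" if "x \<in> V" for x
    unfolding \<Phi>_def using lap_vt V that by blast
  have "(\<Sum>x\<in>V. \<Phi> x * lap E s t L \<Phi> x) = (\<Sum>x\<in>V. \<Phi> x * ((if x = t e then 1 else 0) - (if x = s e then 1 else 0)))"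
    by (intro sum.cong refl) (simp add: lp)
  also have "\<dots> = \<Phi> (t e) - \<Phi> (s e)" by (rule sum_delta_diff[OF finV V(2) V(1)])
  also have "\<dots> = 0" unfolding \<Phi>_def using rho_eq[OF e] Phi_a[OF e] h by simp
  finally have "(\<Sum>x\<in>V. \<Phi> x * lap E s t L \<Phi> x) = 0" .
  then have "\<forall>e\<in>E. \<Phi> (s e) = \<Phi> (t e)" by (rule energy_zero2)
  then have "lap E s t L \<Phi> (t e) = 0" by (rule lap_edges_const)
  then show False using lp[OF V(2)] ab by simp
qed

lemma contr_res_val: assumes e: "e \<in> E" and ab: "s e \<noteq> t e" and x: "x \<in> V" "x \<noteq> t e"
  shows "contr_res V E s t L e x (s e) = rr x (s e) - (vt (s e) x (t e))^2 / rr (s e) (t e)"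
proof -
  define cm where "cm = contr_map s t e"
  define V' where "V' = contr_V V s t e"
  have V: "s e \<in> V" "t e \<in> V" using ends[OF e] by auto
  have cmw: "cm w = (if w = t e then s e else w)" for w unfolding cm_def contr_map_def by simp
  have V'eq: "V' = V - {t e}"
    unfolding V'_def contr_V_def cm_def[symmetric] using V ab by (auto simp: cmw image_iff) 
  interpret C: cnetw V' "E - {e}" "cm \<circ> s" "cm \<circ> t" L
  proof unfold_locales
    show "finite V'" unfolding V'eq using finV by simp
    show "finite (E - {e})" using finE by simp
    fix e' assume "e' \<in> E - {e}"
    then show "(cm \<circ> s) e' \<in> V' \<and> (cm \<circ> t) e' \<in> V'" "L e' > 0" using ends pos V ab unfolding V'eq by (auto simp: cmw)
  next
    show "graph_connected V' (E - {e}) (cm \<circ> s) (cm \<circ> t)"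
      unfolding graph_connected_def
    proof (intro ballI)
      fix x' y' assume "x' \<in> V'" "y' \<in> V'"
      then obtain x y where "x \<in> V" "y \<in> V" "x' = cm x" "y' = cm y" unfolding V'_def contr_V_def cm_def by auto
      then show "(x', y') \<in> (graph_adj (E - {e}) (cm \<circ> s) (cm \<circ> t))\<^sup>*"
        using contr_conn[of x y e] conn unfolding graph_connected_def cm_def by blast
    qed
  qed
  define \<rho> where "\<rho> = rr (s e) (t e)"
  define \<Phi> where "\<Phi> w = vt (s e) w (t e)" for w
  have \<rho>0: "\<rho> \<noteq> 0" unfolding \<rho>_def using rho_pos[OF e ab] .
  have \<Phi>b: "\<Phi> (t e) = \<rho>" unfolding \<Phi>_def \<rho>_def using rho_eq[OF e] .
  have \<Phi>a: "\<Phi> (s e) = 0" unfolding \<Phi>_def using Phi_a[OF e] .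
  define k where "k = vt (s e) (t e) x / \<rho>"
  define Wf where "Wf = (\<lambda>w. 1 * vt (s e) w x + (- k) * \<Phi> w + 0)"
  have Wfa: "Wf (s e) = 0" unfolding Wf_def using vt_z V x \<Phi>a by simp
  have Wfb: "Wf (t e) = 0" unfolding Wf_def k_def using \<Phi>b \<rho>0 by simp
  have Wfoff: "Wf w = 0" if "w \<notin> V" for w unfolding Wf_def \<Phi>_def using vt_off V x that by simp
  have Wfcm: "Wf (cm w) = Wf w" for w using Wfa Wfb by (simp add: cmw)
  have lapE: "lap E s t L Wf w = ((if w = x then 1 else 0) - (if w = s e then 1 else 0))
                 - k * ((if w = t e then 1 else 0) - (if w = s e then 1 else 0))" if w: "w \<in> V" for w
    unfolding Wf_def lap_lin \<Phi>_def using lap_vt V x w by simp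
  have lapD: "lap (E - {e}) s t L Wf w = lap E s t L Wf w" for w
    unfolding lap_remove[OF e finE] using Wfa Wfb by auto
  have lapC: "lap (E - {e}) (cm \<circ> s) (cm \<circ> t) L Wf y
     = lap (E - {e}) s t L Wf y + (if y = s e then lap (E - {e}) s t L Wf (t e) else 0)"
    if y: "y \<in> V'" for y
  proof -
    have yb: "y \<noteq> t e" using y V'eq by auto
    show ?thesis
    proof (cases "y = s e")
      case True
      have "lap (E - {e}) (cm \<circ> s) (cm \<circ> t) L Wf y = lap (E - {e}) s t L Wf y + lap (E - {e}) s t L Wf (t e)"
        unfolding lap_def sum.distrib[symmetric]
        using True Wfa Wfb ab by (intro sum.cong refl) (auto simp: cmw)
      then show ?thesis using True by simp
    next
      case False
      have "lap (E - {e}) (cm \<circ> s) (cm \<circ> t) L Wf y = lap (E - {e}) s t L Wf y"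
        unfolding lap_def
        using False yb Wfa Wfb ab by (intro sum.cong refl) (auto simp: cmw)
      then show ?thesis using False by simp
    qed
  qed
  have kir: "kirchhoff V' (E - {e}) (cm \<circ> s) (cm \<circ> t) L (s e) x Wf"
    unfolding kirchhoff_lap
  proof (intro conjI ballI allI impI)
    fix y assume y: "y \<in> V'"
    then have yV: "y \<in> V" "y \<noteq> t e" using V'eq by auto
    show "lap (E - {e}) (cm \<circ> s) (cm \<circ> t) L Wf y = (if y = x then 1 else 0) - (if y = s e then 1 else 0)"
      unfolding lapC[OF y] lapD using lapE[OF yV(1)] lapE[OF V(2)] yV ab x by auto
  next
    show "Wf (s e) = 0" by (rule Wfa)
  next
    fix w assume "w \<notin> V'" then have "w \<notin> V \<or> w = t e" using V'eq by auto
    then show "Wf w = 0" using Wfoff Wfb by auto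
  qed
  have sV': "s e \<in> V'" using V'eq V ab by auto
  have "contr_res V E s t L e x (s e) = voltage V' (E - {e}) (cm \<circ> s) (cm \<circ> t) L (s e) x x"
    unfolding contr_res_def eff_res_def V'_def cm_def ..
  also have "\<dots> = Wf x" using C.kir_voltage[OF sV' kir] .
  also have "\<dots> = rr x (s e) - (vt (s e) x (t e))^2 / rr (s e) (t e)"
    unfolding Wf_def k_def \<Phi>_def \<rho>_def eff_res_def using recip[of x "t e" "s e"] V x
    by (simp add: power2_eq_square)
  finally show ?thesis .
qed

end

context cnetw begin

lemma edge_all: assumes e: "e \<in> E"
  shows "y_term1 V E s t L e = (rr (s e) (t e))^2 / L e \<and>
         (\<forall>p\<in>V. y_term2 V E s t L e p = (rr p (s e) - rr p (t e))^2 / L e) \<and>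
         coeff_edge V E s t L e = rr (s e) (t e) / L e"
  using bridge_terms[OF e] nonbridge_terms[OF e] by blast

lemma contr_term: assumes e: "e \<in> E"
  shows "coeff_edge V E s t L e * (\<Sum>x\<in>contr_V V s t e. contr_res V E s t L e x (s e))
       = (1 / L e) * (\<Sum>x\<in>V. rr (s e) (t e) * rr x (s e) - ((rr x (s e) + rr (s e) (t e) - rr x (t e)) / 2)^2)"
proof -
  have V: "s e \<in> V" "t e \<in> V" using ends[OF e] by auto
  have co: "coeff_edge V E s t L e = rr (s e) (t e) / L e" using edge_all[OF e] by blast
  define \<rho> where "\<rho> = rr (s e) (t e)"
  define g where "g x = \<rho> * rr x (s e) - ((rr x (s e) + \<rho> - rr x (t e)) / 2)^2" for x
  show ?thesis
  proof (cases "s e = t e")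
    case True
    then have "\<rho> = 0" unfolding \<rho>_def using rr_self V by simp
    moreover have "g x = 0" if "x \<in> V" for x unfolding g_def using True \<open>\<rho> = 0\<close> by simp
    ultimately show ?thesis unfolding co \<rho>_def[symmetric] g_def[symmetric] by simp
  next
    case False
    have \<rho>0: "\<rho> \<noteq> 0" unfolding \<rho>_def using rho_pos[OF e False] .
    have Lp: "L e > 0" using pos[OF e] .
    have cV: "contr_V V s t e = V - {t e}"
      unfolding contr_V_def contr_map_def using V False by (auto simp: image_iff)
    have "(\<Sum>x\<in>contr_V V s t e. contr_res V E s t L e x (s e)) = (\<Sum>x\<in>V - {t e}. g x / \<rho>)"
      unfolding cV
    proof (intro sum.cong refl)
      fix x assume x: "x \<in> V - {t e}"
      have "2 * vt (s e) x (t e) = rr x (s e) + \<rho> - rr x (t e)" unfolding \<rho>_def using Phi_form[OF e] x by blast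
      then have h: "vt (s e) x (t e) = (rr x (s e) + \<rho> - rr x (t e)) / 2" by simp
      have c: "contr_res V E s t L e x (s e) = rr x (s e) - (vt (s e) x (t e))^2 / \<rho>"
        using contr_res_val[OF e False, of x] x unfolding \<rho>_def by blast
      show "contr_res V E s t L e x (s e) = g x / \<rho>"
        unfolding c h g_def using \<rho>0 by (simp add: field_simps)
    qed
    also have "\<dots> = (\<Sum>x\<in>V - {t e}. g x) / \<rho>" by (simp add: sum_divide_distrib)
    also have "(\<Sum>x\<in>V - {t e}. g x) = (\<Sum>x\<in>V. g x)"
    proof -
      have "g (t e) = 0" unfolding g_def \<rho>_def using rr_self[OF V(2)] rr_sym[OF V] by (simp add: power2_eq_square)
      then show ?thesis using sum.remove[OF finV V(2), of g] by simp
    qed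
    finally show ?thesis unfolding co \<rho>_def[symmetric] g_def[symmetric] using \<rho>0 Lp by simp
  qed
qed

end

theorem proposition3p6:
  fixes V :: "'v set" and E :: "'e set" and src tgt :: "'e \<Rightarrow> 'v"
    and L :: "'e \<Rightarrow> real" and p :: 'v
  assumes "metrized_graph V E src tgt L"
    and "p \<in> V"
  shows "2 * kirchhoff_index V E src tgt L =
           real (card V) * y_inv V E src tgt L p
         + (\<Sum>e\<in>E. coeff_edge V E src tgt L e *
              (\<Sum>x\<in>contr_V V src tgt e. contr_res V E src tgt L e x (src e)))"
proof -
  interpret cnetw V E src tgt L
    using assms(1) unfolding metrized_graph_def by unfold_locales auto
  have 1: "(\<Sum>e\<in>E. y_term1 V E src tgt L e) = (\<Sum>e\<in>E. (eff_res V E src tgt L (src e) (tgt e))^2 / L e)"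
    using edge_all by (intro sum.cong) auto
  have 2: "(\<Sum>e\<in>E. y_term2 V E src tgt L e p) = (\<Sum>e\<in>E. (eff_res V E src tgt L p (src e) - eff_res V E src tgt L p (tgt e))^2 / L e)"
    using edge_all assms(2) by (intro sum.cong) auto
  have 3: "(\<Sum>e\<in>E. coeff_edge V E src tgt L e *
              (\<Sum>x\<in>contr_V V src tgt e. contr_res V E src tgt L e x (src e)))
     = (\<Sum>e\<in>E. (1 / L e) * (\<Sum>x\<in>V. eff_res V E src tgt L (src e) (tgt e) * eff_res V E src tgt L x (src e)
          - ((eff_res V E src tgt L x (src e) + eff_res V E src tgt L (src e) (tgt e) - eff_res V E src tgt L x (tgt e)) / 2)^2))"
    using contr_term by (intro sum.cong) auto
  show ?thesis
    unfolding kirchhoff_index_def y_inv_def 1 2 3 main_id[OF assms(2), symmetric] by simp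
qed


end
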